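(* Let $H$ be a graph and $G=H\odot K_1$. Then: (1) $G$ is $A$-AW for every integer $\ell\ge 2$; (2) if $G$ has $m$ edges and $n$ vertices, then $T_{V(G)}^{A(G)}(1)=\{2(m-n)\}$; (3) if $G$ is a forest with $c$ connected components, then $T_{V(G)}^{A(G)}(1)=\{-2c\}$.
   Context: All graphs are finite and simple. For a graph $H$, $H\odot K_1$ is the graph obtained from $H$ by adding, for each vertex $u$ of $H$, a new vertex adjacent only to $u$. Fix $\ell\ge 2$; labelings are maps $V(G)\to\mathbb{Z}_\ell$. In the adjacency Lights Out game, toggling a vertex $w$ adds $1$ (mod $\ell$) to the label of each vertex of the open neighborhood $N(w)$; the game is won when all labels are $0$; $G$ is $A$-AW if every labeling is winnable. For $U\subseteq V(G)$ and $r\in\mathbb{Z}_\ell$, $T_U^{A(G)}(r)\subseteq\mathbb{Z}_\ell$ is the set of all $t$ such that the adjacency game on $G$ starting from the labeling that is $r$ on $U$ and $0$ elsewhere can be won with the vertices of $U$ toggled a total of $t$ times (mod $\ell$). *)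

theory Defs
  imports Main
begin

definition simple_graph :: "'a set \<Rightarrow> ('a \<Rightarrow> 'a \<Rightarrow> bool) \<Rightarrow> bool" where
  "simple_graph V E \<longleftrightarrow> finite V \<and>
     (\<forall>u v. E u v \<longrightarrow> u \<in> V \<and> v \<in> V \<and> u \<noteq> v \<and> E v u)"

text \<open>Corona H with K1: vertex (u,False) is the copy of u, (u,True) is its new pendant vertex.\<close>
definition corona_V :: "'a set \<Rightarrow> ('a \<times> bool) set" where
  "corona_V V = V \<times> UNIV"

definition corona_E :: "'a set \<Rightarrow> ('a \<Rightarrow> 'a \<Rightarrow> bool) \<Rightarrow> ('a \<times> bool) \<Rightarrow> ('a \<times> bool) \<Rightarrow> bool" where
  "corona_E V E x y \<longleftrightarrow>
     (\<not> snd x \<and> \<not> snd y \<and> E (fst x) (fst y)) \<or>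
     (fst x = fst y \<and> fst x \<in> V \<and> snd x \<noteq> snd y)"

definition edges :: "'a set \<Rightarrow> ('a \<Rightarrow> 'a \<Rightarrow> bool) \<Rightarrow> 'a set set" where
  "edges V E = {{u, v} | u v. u \<in> V \<and> v \<in> V \<and> E u v}"

definition nbhd :: "'a set \<Rightarrow> ('a \<Rightarrow> 'a \<Rightarrow> bool) \<Rightarrow> 'a \<Rightarrow> 'a set" where
  "nbhd V E w = {v \<in> V. E w v}"

text \<open>Adjacency Lights Out over Z_l (l \<ge> 2), with Z_l represented by int modulo l.
  A toggle vector x gives the number of times each vertex is toggled; toggling w adds 1
  to every vertex of N(w).\<close>
definition wins :: "int \<Rightarrow> 'a set \<Rightarrow> ('a \<Rightarrow> 'a \<Rightarrow> bool) \<Rightarrow> ('a \<Rightarrow> int) \<Rightarrow> ('a \<Rightarrow> int) \<Rightarrow> bool" where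
  "wins l V E f x \<longleftrightarrow>
     (\<forall>v\<in>V. (f v + (\<Sum>w\<in>{w \<in> V. v \<in> nbhd V E w}. x w)) mod l = 0)"

definition winnable :: "int \<Rightarrow> 'a set \<Rightarrow> ('a \<Rightarrow> 'a \<Rightarrow> bool) \<Rightarrow> ('a \<Rightarrow> int) \<Rightarrow> bool" where
  "winnable l V E f \<longleftrightarrow> (\<exists>x. wins l V E f x)"

definition A_AW :: "int \<Rightarrow> 'a set \<Rightarrow> ('a \<Rightarrow> 'a \<Rightarrow> bool) \<Rightarrow> bool" where
  "A_AW l V E \<longleftrightarrow> (\<forall>f. winnable l V E f)"

text \<open>T_U^{A(G)}(r): the residues t in Z_l (represented in {0..<l}) such that the
  game from the labeling that is r on U and 0 elsewhere can be won with the vertices of U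
  toggled a total of t times (mod l).\<close>
definition T_set :: "int \<Rightarrow> 'a set \<Rightarrow> ('a \<Rightarrow> 'a \<Rightarrow> bool) \<Rightarrow> 'a set \<Rightarrow> int \<Rightarrow> int set" where
  "T_set l V E U r =
     {t. \<exists>x. wins l V E (\<lambda>v. if v \<in> U then r else 0) x \<and>
            t = (\<Sum>u\<in>U. x u) mod l}"

definition is_cycle :: "'a set \<Rightarrow> ('a \<Rightarrow> 'a \<Rightarrow> bool) \<Rightarrow> 'a list \<Rightarrow> bool" where
  "is_cycle V E cs \<longleftrightarrow> length cs \<ge> 3 \<and> distinct cs \<and> set cs \<subseteq> V \<and>
     (\<forall>i < length cs - 1. E (cs ! i) (cs ! Suc i)) \<and> E (last cs) (hd cs)"

definition forest :: "'a set \<Rightarrow> ('a \<Rightarrow> 'a \<Rightarrow> bool) \<Rightarrow> bool" where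
  "forest V E \<longleftrightarrow> \<not> (\<exists>cs. is_cycle V E cs)"

definition reach :: "'a set \<Rightarrow> ('a \<Rightarrow> 'a \<Rightarrow> bool) \<Rightarrow> ('a \<times> 'a) set" where
  "reach V E = {(u, v). u \<in> V \<and> v \<in> V \<and> (\<lambda>a b. E a b \<and> a \<in> V \<and> b \<in> V)\<^sup>*\<^sup>* u v}"

definition components :: "'a set \<Rightarrow> ('a \<Rightarrow> 'a \<Rightarrow> bool) \<Rightarrow> 'a set set" where
  "components V E = V // reach V E"

end

theory Submission imports Defs "HOL-Library.Transitive_Closure_Table"
begin

lemma path_succ: "rtrancl_path r x xs y \<Longrightarrow> successively r (x#xs) \<and> last (x#xs) = y"
  by (induction rule: rtrancl_path.induct) auto

lemma rtranclp_symm: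
  assumes "\<And>a b. r a b \<Longrightarrow> r b a" "r\<^sup>*\<^sup>* x y" shows "r\<^sup>*\<^sup>* y x"
  using assms(2) by (induction rule: rtranclp_induct)
     (auto intro: converse_rtranclp_into_rtranclp assms(1))

lemma sg_sym: "simple_graph V E \<Longrightarrow> E a b \<Longrightarrow> E b a"
  and sg_in: "simple_graph V E \<Longrightarrow> E a b \<Longrightarrow> a \<in> V \<and> b \<in> V \<and> a \<noteq> b"
  unfolding simple_graph_def by blast+

lemma reach_equiv:
  assumes "simple_graph V E" shows "equiv V (reach V E)"
proof -
  let ?R = "\<lambda>a b. E a b \<and> a \<in> V \<and> b \<in> V"
  have s: "\<And>a b. ?R a b \<Longrightarrow> ?R b a" using sg_sym[OF assms] by blast
  show ?thesis unfolding equiv_def refl_on_def sym_def trans_def reach_def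
    using rtranclp_symm[of ?R, OF s] by (auto intro: rtranclp_trans)
qed

lemma no_edges_comp:
  assumes "simple_graph V E" "edges V E = {}"
  shows "card (components V E) = card V"
proof -
  have nE: "\<And>a b. \<not> E a b"
  proof
    fix a b assume "E a b"
    then have "{a,b} \<in> edges V E" using sg_in[OF assms(1)] unfolding edges_def by blast
    then show False using assms(2) by simp
  qed
  have "(\<lambda>a b. E a b \<and> a \<in> V \<and> b \<in> V) = (\<lambda>a b. False)" using nE by auto
  then have r: "reach V E = Id_on V" unfolding reach_def by (auto simp: Id_on_def elim: rtranclp.cases)
  have "components V E = (\<lambda>v. {v}) ` V"
    unfolding components_def r quotient_def by (auto simp: Id_on_def)
  then show ?thesis by (simp add: card_image)
qed

lemma edges_finite: "simple_graph V E \<Longrightarrow> finite (edges V E)"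
proof -
  assume a: "simple_graph V E"
  have "edges V E \<subseteq> Pow V" unfolding edges_def by auto
  moreover have "finite V" using a simple_graph_def by blast
  ultimately show ?thesis by (meson finite_Pow_iff finite_subset)
qed

lemma del_edge_sg:
  assumes "simple_graph V E"
  shows "simple_graph V (\<lambda>a b. E a b \<and> {a,b} \<noteq> {u,v})"
  using assms unfolding simple_graph_def by (metis insert_commute)

lemma del_edge_forest:
  assumes "forest V E"
  shows "forest V (\<lambda>a b. E a b \<and> {a,b} \<noteq> {u,v})"
  using assms unfolding forest_def is_cycle_def by blast

lemma del_edge_edges:
  assumes "simple_graph V E"
  shows "edges V (\<lambda>a b. E a b \<and> {a,b} \<noteq> {u,v}) = edges V E - {{u,v}}"
  unfolding edges_def by blast

lemma bridge:
  assumes sg: "simple_graph V E" and fo: "forest V E" and uv: "E u v"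
  shows "\<not> (\<lambda>a b. (E a b \<and> {a,b} \<noteq> {u,v}) \<and> a \<in> V \<and> b \<in> V)\<^sup>*\<^sup>* u v"
proof
  define R where "R = (\<lambda>a b. (E a b \<and> {a,b} \<noteq> {u,v}) \<and> a \<in> V \<and> b \<in> V)"
  assume "R\<^sup>*\<^sup>* u v"
  then obtain xs where "rtrancl_path R u xs v" using rtranclp_eq_rtrancl_path by metis
  then obtain ys where p: "rtrancl_path R u ys v" and d: "distinct (u#ys)"
    by (metis rtrancl_path_distinct)
  have uvV: "u \<in> V" "v \<in> V" "u \<noteq> v" using sg_in[OF sg uv] by auto
  have sc: "successively R (u#ys)" and la: "last (u#ys) = v" using path_succ[OF p] by auto
  have yV: "set ys \<subseteq> V"
  proof
    fix z assume "z \<in> set ys"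
    then have "Rangep R z" by (rule rtrancl_path_Range[OF p])
    then show "z \<in> V" unfolding R_def by blast
  qed
  have len: "length (u#ys) \<ge> 3"
  proof (cases ys)
    case Nil then show ?thesis using la uvV by simp
  next
    case (Cons a list)
    show ?thesis
    proof (cases list)
      case Nil
      then have "R u v" using sc la Cons by simp
      then show ?thesis unfolding R_def by simp
    qed (simp add: Cons)
  qed
  have "is_cycle V E (u#ys)"
    unfolding is_cycle_def
  proof (intro conjI)
    show "\<forall>i<length (u # ys) - 1. E ((u # ys) ! i) ((u # ys) ! Suc i)"
    proof (intro allI impI)
      fix i assume "i < length (u # ys) - 1"
      then have "R ((u # ys) ! i) ((u # ys) ! Suc i)" using sc unfolding successively_conv_nth by simp
      then show "E ((u # ys) ! i) ((u # ys) ! Suc i)" unfolding R_def by simp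
    qed
    show "E (last (u # ys)) (hd (u # ys))" using la sg_sym[OF sg uv] by simp
    show "3 \<le> length (u # ys)" by (rule len)
    show "distinct (u#ys)" by (rule d)
    show "set (u # ys) \<subseteq> V" using yV uvV by simp
  qed
  then show False using fo forest_def by blast
qed

lemma reach_mono:
  assumes "\<And>a b. E' a b \<Longrightarrow> E a b" "(x,y) \<in> reach V E'" shows "(x,y) \<in> reach V E"
  using assms(2) unfolding reach_def by (auto intro: rtranclp_mono[THEN predicate2D, rotated] simp: assms(1))

lemma reach_char:
  assumes sg: "simple_graph V E" and uv: "E u v"
  defines "Q \<equiv> reach V (\<lambda>a b. E a b \<and> {a,b} \<noteq> {u,v})"
  shows "(x,y) \<in> reach V E \<longleftrightarrow> (x,y) \<in> Q \<or> ((x,u) \<in> Q \<and> (v,y) \<in> Q) \<or> ((x,v) \<in> Q \<and> (u,y) \<in> Q)"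
proof -
  have eQ: "equiv V Q" unfolding Q_def by (rule reach_equiv[OF del_edge_sg[OF sg]])
  have eP: "equiv V (reach V E)" by (rule reach_equiv[OF sg])
  have uvV: "u \<in> V" "v \<in> V" using sg_in[OF sg uv] by auto
  have QP: "\<And>a b. (a,b) \<in> Q \<Longrightarrow> (a,b) \<in> reach V E" unfolding Q_def
    by (erule reach_mono[rotated]) simp
  have uvP: "(u,v) \<in> reach V E" "(v,u) \<in> reach V E" using uvV uv sg_sym[OF sg uv]
    unfolding reach_def by auto
  have sQ: "\<And>a b. (a,b) \<in> Q \<Longrightarrow> (b,a) \<in> Q" using eQ unfolding equiv_def sym_def by blast
  have tQ: "\<And>a b c. (a,b) \<in> Q \<Longrightarrow> (b,c) \<in> Q \<Longrightarrow> (a,c) \<in> Q" using eQ unfolding equiv_def trans_def by blast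
  have rQ: "\<And>a. a \<in> V \<Longrightarrow> (a,a) \<in> Q" using eQ unfolding equiv_def refl_on_def by blast
  have tP: "\<And>a b c. (a,b) \<in> reach V E \<Longrightarrow> (b,c) \<in> reach V E \<Longrightarrow> (a,c) \<in> reach V E"
    using eP unfolding equiv_def trans_def by blast
  show ?thesis
  proof
    assume "(x,y) \<in> reach V E"
    then have xV: "x \<in> V" and rt: "(\<lambda>a b. E a b \<and> a \<in> V \<and> b \<in> V)\<^sup>*\<^sup>* x y" unfolding reach_def by auto
    from rt show "(x,y) \<in> Q \<or> ((x,u) \<in> Q \<and> (v,y) \<in> Q) \<or> ((x,v) \<in> Q \<and> (u,y) \<in> Q)"
    proof (induction rule: rtranclp_induct)
      case base then show ?case using rQ xV by blast
    next
      case (step b c)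
      show ?case
      proof (cases "{b,c} = {u,v}")
        case True
        then have "(b = u \<and> c = v) \<or> (b = v \<and> c = u)" by (auto simp: doubleton_eq_iff)
        moreover have "(v,v) \<in> Q" "(u,u) \<in> Q" using rQ uvV by auto
        moreover have "b = u \<Longrightarrow> c = v \<Longrightarrow> ?thesis"
          using step.IH \<open>(v,v) \<in> Q\<close> \<open>(u,u) \<in> Q\<close> sQ tQ by metis
        moreover have "b = v \<Longrightarrow> c = u \<Longrightarrow> ?thesis"
          using step.IH \<open>(v,v) \<in> Q\<close> \<open>(u,u) \<in> Q\<close> sQ tQ by metis
        ultimately show ?thesis by blast
      next
        case False
        then have "(b,c) \<in> Q" using step.hyps(2) unfolding Q_def reach_def by auto
        then show ?thesis using step.IH tQ by blast
      qed
    qed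
  next
    assume "(x,y) \<in> Q \<or> ((x,u) \<in> Q \<and> (v,y) \<in> Q) \<or> ((x,v) \<in> Q \<and> (u,y) \<in> Q)"
    then show "(x,y) \<in> reach V E" using QP uvP tP by blast
  qed
qed


lemma comp_step:
  assumes sg: "simple_graph V E" and uv: "E u v"
    and nr: "\<not> (\<lambda>a b. (E a b \<and> {a,b} \<noteq> {u,v}) \<and> a \<in> V \<and> b \<in> V)\<^sup>*\<^sup>* u v"
  shows "card (components V (\<lambda>a b. E a b \<and> {a,b} \<noteq> {u,v})) = card (components V E) + 1"
proof -
  define Q where "Q = reach V (\<lambda>a b. E a b \<and> {a,b} \<noteq> {u,v})"
  define P where "P = reach V E"
  have ch: "\<And>x y. (x,y) \<in> P \<longleftrightarrow> (x,y) \<in> Q \<or> ((x,u) \<in> Q \<and> (v,y) \<in> Q) \<or> ((x,v) \<in> Q \<and> (u,y) \<in> Q)"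
    unfolding P_def Q_def by (rule reach_char[OF sg uv])
  have eQ: "equiv V Q" unfolding Q_def by (rule reach_equiv[OF del_edge_sg[OF sg]])
  have uvV: "u \<in> V" "v \<in> V" using sg_in[OF sg uv] by auto
  have fV: "finite V" using sg simple_graph_def by blast
  have sQ: "\<And>a b. (a,b) \<in> Q \<Longrightarrow> (b,a) \<in> Q" using eQ unfolding equiv_def sym_def by blast
  have tQ: "\<And>a b c. (a,b) \<in> Q \<Longrightarrow> (b,c) \<in> Q \<Longrightarrow> (a,c) \<in> Q" using eQ unfolding equiv_def trans_def by blast
  have rQ: "\<And>a. a \<in> V \<Longrightarrow> (a,a) \<in> Q" using eQ unfolding equiv_def refl_on_def by blast
  have QV: "Q \<subseteq> V \<times> V" unfolding Q_def reach_def by auto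
  have nuv: "(u,v) \<notin> Q" using nr unfolding Q_def reach_def by auto
  define Cu where "Cu = Q``{u}"
  define Cv where "Cv = Q``{v}"
  have cls1: "P``{a} = Cu \<union> Cv" if "(a,u) \<in> Q" for a
  proof (rule set_eqI)
    fix y
    have "(a,y) \<in> P \<Longrightarrow> (u,y) \<in> Q \<or> (v,y) \<in> Q"
    proof -
      assume "(a,y) \<in> P"
      then consider "(a,y) \<in> Q" | "(v,y) \<in> Q" | "(u,y) \<in> Q" using ch by blast
      then show ?thesis
      proof cases
        case 1 then show ?thesis using tQ[OF sQ[OF that]] by blast
      qed auto
    qed
    moreover have "(u,y) \<in> Q \<Longrightarrow> (a,y) \<in> P" using ch tQ[OF that] by blast
    moreover have "(v,y) \<in> Q \<Longrightarrow> (a,y) \<in> P" using ch that by blast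
    ultimately show "y \<in> P``{a} \<longleftrightarrow> y \<in> Cu \<union> Cv" unfolding Cu_def Cv_def by blast
  qed
  have cls2: "P``{a} = Cu \<union> Cv" if "(a,v) \<in> Q" for a
  proof (rule set_eqI)
    fix y
    have "(a,y) \<in> P \<Longrightarrow> (u,y) \<in> Q \<or> (v,y) \<in> Q"
    proof -
      assume "(a,y) \<in> P"
      then consider "(a,y) \<in> Q" | "(v,y) \<in> Q" | "(u,y) \<in> Q" using ch by blast
      then show ?thesis
      proof cases
        case 1 then show ?thesis using tQ[OF sQ[OF that]] by blast
      qed auto
    qed
    moreover have "(v,y) \<in> Q \<Longrightarrow> (a,y) \<in> P" using ch tQ[OF that] by blast
    moreover have "(u,y) \<in> Q \<Longrightarrow> (a,y) \<in> P" using ch that by blast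
    ultimately show "y \<in> P``{a} \<longleftrightarrow> y \<in> Cu \<union> Cv" unfolding Cu_def Cv_def by blast
  qed
  have cls: "P``{a} = (if (u,a) \<in> Q \<or> (v,a) \<in> Q then Cu \<union> Cv else Q``{a})" if "a \<in> V" for a
  proof (cases "(u,a) \<in> Q \<or> (v,a) \<in> Q")
    case True
    then show ?thesis using cls1 cls2 sQ by auto
  next
    case False
    then have "(a,u) \<notin> Q" "(a,v) \<notin> Q" using sQ by blast+
    then show ?thesis using False ch by auto
  qed
  have CuQ: "Cu \<in> V//Q" "Cv \<in> V//Q" unfolding Cu_def Cv_def using uvV by (auto intro: quotientI)
  have Cne: "Cu \<noteq> Cv"
  proof
    assume "Cu = Cv"
    moreover have "v \<in> Cv" unfolding Cv_def using rQ uvV by auto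
    ultimately show False using nuv unfolding Cu_def by auto
  qed
  have PQ: "V//P = insert (Cu \<union> Cv) (V//Q - {Cu,Cv})"
  proof (rule set_eqI)
    fix X show "X \<in> V//P \<longleftrightarrow> X \<in> insert (Cu \<union> Cv) (V//Q - {Cu,Cv})"
    proof
      assume "X \<in> V//P"
      then obtain a where a: "a \<in> V" "X = P``{a}" by (auto elim: quotientE)
      show "X \<in> insert (Cu \<union> Cv) (V//Q - {Cu,Cv})"
      proof (cases "(u,a) \<in> Q \<or> (v,a) \<in> Q")
        case True then show ?thesis using cls[OF a(1)] a(2) by simp
      next
        case False
        then have "X = Q``{a}" using cls[OF a(1)] a(2) by simp
        moreover have "a \<in> Q``{a}" using rQ a(1) by auto
        moreover have "a \<notin> Cu" "a \<notin> Cv" using False unfolding Cu_def Cv_def by auto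
        ultimately show ?thesis using a(1) by (auto intro: quotientI)
      qed
    next
      assume X: "X \<in> insert (Cu \<union> Cv) (V//Q - {Cu,Cv})"
      show "X \<in> V//P"
      proof (cases "X = Cu \<union> Cv")
        case True
        then have "X = P``{u}" using cls[OF uvV(1)] rQ[OF uvV(1)] by simp
        then show ?thesis using uvV by (auto intro: quotientI)
      next
        case False
        then have "X \<in> V//Q" "X \<noteq> Cu" "X \<noteq> Cv" using X by auto
        then obtain a where a: "a \<in> V" "X = Q``{a}" by (auto elim: quotientE)
        have "(u,a) \<notin> Q"
        proof
          assume "(u,a) \<in> Q"
          then have "Q``{a} = Cu" unfolding Cu_def using equiv_class_eq[OF eQ] sQ by metis
          then show False using a \<open>X \<noteq> Cu\<close> by simp
        qed
        moreover have "(v,a) \<notin> Q"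
        proof
          assume "(v,a) \<in> Q"
          then have "Q``{a} = Cv" unfolding Cv_def using equiv_class_eq[OF eQ] sQ by metis
          then show False using a \<open>X \<noteq> Cv\<close> by simp
        qed
        ultimately have "X = P``{a}" using cls[OF a(1)] a(2) by simp
        then show ?thesis using a(1) by (auto intro: quotientI)
      qed
    qed
  qed
  have fQ: "finite (V//Q)" by (rule finite_quotient[OF fV QV])
  have nin: "Cu \<union> Cv \<notin> V//Q - {Cu,Cv}"
  proof
    assume "Cu \<union> Cv \<in> V//Q - {Cu,Cv}"
    moreover have "v \<in> Cv" "v \<notin> Cu" unfolding Cu_def Cv_def using rQ uvV nuv by auto
    ultimately have "Cu \<union> Cv \<in> V//Q" "Cu \<union> Cv \<noteq> Cu" by auto
    then obtain a where a: "a \<in> V" "Cu \<union> Cv = Q``{a}" "Cu \<union> Cv \<noteq> Cu" by (metis quotientE)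
    have "u \<in> Cu" unfolding Cu_def using rQ uvV by auto
    then have "(a,u) \<in> Q" using a(2) by auto
    then have "Q``{a} = Cu" unfolding Cu_def using equiv_class_eq[OF eQ] by metis
    then show False using a by simp
  qed
  have "card (V//P) = card (V//Q - {Cu,Cv}) + 1" using PQ nin fQ by simp
  moreover have "card (V//Q - {Cu,Cv}) = card (V//Q) - 2" using CuQ Cne fQ by (simp add: card_Diff_subset)
  moreover have "card (V//Q) \<ge> 2"
  proof -
    have "card {Cu,Cv} \<le> card (V//Q)" using CuQ fQ by (intro card_mono) auto
    then show ?thesis using Cne by simp
  qed
  ultimately have "card (V//Q) = card (V//P) + 1" by simp
  then show ?thesis unfolding components_def P_def Q_def .
qed

lemma forest_count:
  assumes "simple_graph V E" "forest V E"
  shows "card (edges V E) + card (components V E) = card V"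
  using assms
proof (induction "card (edges V E)" arbitrary: E)
  case 0
  then have "edges V E = {}" using edges_finite[OF 0(2)] by (metis card_0_eq)
  then show ?case using no_edges_comp[OF 0(2)] by simp
next
  case (Suc n)
  then have "edges V E \<noteq> {}" by auto
  then obtain u v where uv: "E u v" "{u,v} \<in> edges V E" unfolding edges_def by blast
  define E' where "E' = (\<lambda>a b. E a b \<and> {a,b} \<noteq> {u,v})"
  have sg': "simple_graph V E'" unfolding E'_def by (rule del_edge_sg[OF Suc(3)])
  have fo': "forest V E'" unfolding E'_def by (rule del_edge_forest[OF Suc(4)])
  have ee: "edges V E' = edges V E - {{u,v}}" unfolding E'_def by (rule del_edge_edges[OF Suc(3)])
  have ce: "card (edges V E') = n" using ee uv Suc(2) edges_finite[OF Suc(3)] by simp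
  have "card (edges V E') + card (components V E') = card V" using Suc(1)[OF ce[symmetric] sg' fo'] .
  moreover have "card (components V E') = card (components V E) + 1"
    unfolding E'_def by (rule comp_step[OF Suc(3) uv(1) bridge[OF Suc(3) Suc(4) uv(1)]])
  ultimately show ?case using ce Suc(2) by simp
qed


lemma handshake:
  assumes sg: "simple_graph V E"
  shows "(\<Sum>v\<in>V. card (nbhd V E v)) = 2 * card (edges V E)"
proof -
  have fV: "finite V" using sg simple_graph_def by blast
  define D where "D = Sigma V (nbhd V E)"
  have fn: "\<And>v. finite (nbhd V E v)" using fV unfolding nbhd_def by simp
  have c1: "card D = (\<Sum>v\<in>V. card (nbhd V E v))" unfolding D_def using fV fn by simp
  define F where "F e = {p \<in> D. {fst p, snd p} = e}" for e
  have fD: "finite D" unfolding D_def using fV fn by simp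
  have DU: "D = (\<Union>e\<in>edges V E. F e)"
    unfolding D_def F_def edges_def nbhd_def by (auto; blast)
  have F2: "card (F e) = 2" if eE: "e \<in> edges V E" for e
  proof -
    obtain a b where ab: "e = {a,b}" "a \<in> V" "b \<in> V" "E a b" using eE unfolding edges_def by blast
    have "a \<noteq> b" using sg_in[OF sg ab(4)] by simp
    have "F e = {(a,b),(b,a)}"
    proof (rule set_eqI)
      fix p :: "'a \<times> 'a"
      obtain x y where p: "p = (x,y)" by fastforce
      have "{x,y} = {a,b} \<longleftrightarrow> (x = a \<and> y = b) \<or> (x = b \<and> y = a)" by (rule doubleton_eq_iff)
      moreover have "(x,y) \<in> D \<longleftrightarrow> x \<in> V \<and> y \<in> V \<and> E x y" unfolding D_def nbhd_def by simp
      ultimately show "p \<in> F e \<longleftrightarrow> p \<in> {(a,b),(b,a)}"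
        unfolding F_def ab(1) p using ab sg_sym[OF sg ab(4)] by auto
    qed
    then show ?thesis using \<open>a \<noteq> b\<close> by simp
  qed
  have "card D = (\<Sum>e\<in>edges V E. card (F e))"
    unfolding DU
    by (rule card_UN_disjoint[OF edges_finite[OF sg]]) (use fD in \<open>simp_all add: F_def, blast\<close>)
  also have "\<dots> = 2 * card (edges V E)" using F2 by simp
  finally show ?thesis using c1 by simp
qed

lemma in_nbhd_sym:
  assumes "simple_graph V E" "v \<in> V"
  shows "{w \<in> V. v \<in> nbhd V E w} = nbhd V E v"
  using assms sg_sym[OF assms(1)] unfolding nbhd_def by blast

lemma corona_sg:
  assumes "simple_graph V E"
  shows "simple_graph (corona_V V) (corona_E V E)"
  using assms unfolding simple_graph_def corona_V_def corona_E_def by auto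

lemma corona_nbF:
  assumes "simple_graph V E" "u \<in> V"
  shows "nbhd (corona_V V) (corona_E V E) (u,False) = insert (u,True) ((\<lambda>w. (w,False)) ` nbhd V E u)"
  using assms sg_in[OF assms(1)] unfolding nbhd_def corona_V_def corona_E_def by auto

lemma corona_nbT:
  assumes "simple_graph V E" "u \<in> V"
  shows "nbhd (corona_V V) (corona_E V E) (u,True) = {(u,False)}"
  using assms unfolding nbhd_def corona_V_def corona_E_def by auto


definition x0 :: "'a set \<Rightarrow> ('a \<Rightarrow> 'a \<Rightarrow> bool) \<Rightarrow> ('a \<times> bool \<Rightarrow> int) \<Rightarrow> 'a \<times> bool \<Rightarrow> int" where
  "x0 V E f p = (if snd p then - f (fst p, False) + (\<Sum>w\<in>nbhd V E (fst p). f (w, True))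
                 else - f (fst p, True))"

lemma sumF:
  assumes sg: "simple_graph V E" "u \<in> V"
  shows "(\<Sum>w\<in>{w \<in> corona_V V. (u,False) \<in> nbhd (corona_V V) (corona_E V E) w}. x w)
         = x (u,True) + (\<Sum>w\<in>nbhd V E u. x (w,False))"
proof -
  have fV: "finite V" using sg simple_graph_def by blast
  have "(u,False) \<in> corona_V V" using assms unfolding corona_V_def by simp
  then have "{w \<in> corona_V V. (u,False) \<in> nbhd (corona_V V) (corona_E V E) w}
       = insert (u,True) ((\<lambda>w. (w,False)) ` nbhd V E u)"
    using in_nbhd_sym[OF corona_sg[OF sg(1)]] corona_nbF[OF assms] by simp
  moreover have "finite (nbhd V E u)" using fV unfolding nbhd_def by simp
  moreover have "inj_on (\<lambda>w. (w,False)) (nbhd V E u)" by (auto simp: inj_on_def)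
  ultimately show ?thesis by (simp add: sum.reindex image_iff)
qed

lemma sumT:
  assumes sg: "simple_graph V E" "u \<in> V"
  shows "(\<Sum>w\<in>{w \<in> corona_V V. (u,True) \<in> nbhd (corona_V V) (corona_E V E) w}. x w) = x (u,False)"
proof -
  have "(u,True) \<in> corona_V V" using assms unfolding corona_V_def by simp
  then have "{w \<in> corona_V V. (u,True) \<in> nbhd (corona_V V) (corona_E V E) w} = {(u,False)}"
    using in_nbhd_sym[OF corona_sg[OF sg(1)]] corona_nbT[OF assms] by simp
  then show ?thesis by simp
qed

lemma x0_wins:
  assumes sg: "simple_graph V E"
  shows "wins l (corona_V V) (corona_E V E) f (x0 V E f)"
  unfolding wins_def
proof
  fix p assume "p \<in> corona_V V"
  then obtain u b where p: "p = (u,b)" "u \<in> V" unfolding corona_V_def by auto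
  show "(f p + (\<Sum>w\<in>{w \<in> corona_V V. p \<in> nbhd (corona_V V) (corona_E V E) w}. x0 V E f w)) mod l = 0"
  proof (cases b)
    case True then have pp: "p = (u,True)" using p by simp
    show ?thesis unfolding pp sumT[OF sg p(2)] by (simp add: x0_def)
  next
    case False then have pp: "p = (u,False)" using p by simp
    show ?thesis unfolding pp sumF[OF sg p(2)] by (simp add: x0_def sum_negf)
  qed
qed

lemma x0_uniq:
  assumes sg: "simple_graph V E" and w: "wins l (corona_V V) (corona_E V E) f x"
    and pV: "p \<in> corona_V V"
  shows "l dvd (x p - x0 V E f p)"
proof -
  have W: "\<And>u b. u \<in> V \<Longrightarrow> l dvd (f (u,b) + (\<Sum>w\<in>{w \<in> corona_V V. (u,b) \<in> nbhd (corona_V V) (corona_E V E) w}. x w))"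
    using w unfolding wins_def corona_V_def by (simp add: mod_eq_0_iff_dvd)
  have A: "l dvd (x (u,False) - x0 V E f (u,False))" if "u \<in> V" for u
    using W[OF that, of True] unfolding sumT[OF sg that] by (simp add: x0_def add.commute)
  obtain u b where p: "p = (u,b)" "u \<in> V" using pV unfolding corona_V_def by auto
  show ?thesis
  proof (cases b)
    case False then show ?thesis using A p by simp
  next
    case True
    have d1: "l dvd (f (u,False) + x (u,True) + (\<Sum>w\<in>nbhd V E u. x (w,False)))"
      using W[OF p(2), of False] unfolding sumF[OF sg p(2)] by (simp add: add.assoc)
    have d2: "l dvd (\<Sum>w\<in>nbhd V E u. x (w,False) + f (w,True))"
    proof (rule dvd_sum)
      fix w assume "w \<in> nbhd V E u"
      then have "w \<in> V" unfolding nbhd_def by simp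
      then show "l dvd x (w,False) + f (w,True)" using A[of w] by (simp add: x0_def)
    qed
    have eq: "x (u,True) - x0 V E f (u,True) =
        (f (u,False) + x (u,True) + (\<Sum>w\<in>nbhd V E u. x (w,False)))
        - (\<Sum>w\<in>nbhd V E u. x (w,False) + f (w,True))"
      by (simp add: x0_def sum.distrib)
    have pp: "p = (u,True)" using p True by simp
    show ?thesis unfolding pp eq by (rule dvd_diff[OF d1 d2])
  qed
qed


lemma sum_corona:
  "finite V \<Longrightarrow> (\<Sum>p\<in>corona_V V. g p) = (\<Sum>u\<in>V. g (u,False) + g (u,True))"
proof -
  assume "finite V"
  have "(\<Sum>u\<in>V. \<Sum>b\<in>UNIV. g (u,b)) = (\<Sum>(u,b)\<in>V\<times>UNIV. g (u,b))" by (rule sum.cartesian_product)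
  then show ?thesis unfolding corona_V_def by (simp add: UNIV_bool add.commute)
qed

lemma T_main:
  assumes sg: "simple_graph V E"
  shows "T_set l (corona_V V) (corona_E V E) (corona_V V) 1 =
    {(\<Sum>p\<in>corona_V V. x0 V E (\<lambda>v. if v \<in> corona_V V then 1 else 0) p) mod l}"
  (is "?T = {?S mod l}")
proof -
  let ?f = "\<lambda>v. if v \<in> corona_V V then 1 else 0 :: int"
  have fV: "finite V" using sg simple_graph_def by blast
  have fG: "finite (corona_V V)" using fV unfolding corona_V_def by simp
  show ?thesis
  proof (rule set_eqI)
    fix t
    show "t \<in> ?T \<longleftrightarrow> t \<in> {?S mod l}"
    proof
      assume "t \<in> ?T"
      then obtain x where w: "wins l (corona_V V) (corona_E V E) ?f x"
        and t: "t = (\<Sum>u\<in>corona_V V. x u) mod l" unfolding T_set_def by blast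
      have "l dvd (\<Sum>p\<in>corona_V V. x p - x0 V E ?f p)"
        by (rule dvd_sum) (rule x0_uniq[OF sg w])
      then have "l dvd (\<Sum>p\<in>corona_V V. x p) - ?S" by (simp add: sum_subtractf)
      then show "t \<in> {?S mod l}" using t by (simp add: mod_eq_dvd_iff)
    next
      assume "t \<in> {?S mod l}"
      then show "t \<in> ?T" unfolding T_set_def using x0_wins[OF sg, of l ?f] by blast
    qed
  qed
qed

lemma S_val:
  assumes sg: "simple_graph V E"
  shows "(\<Sum>p\<in>corona_V V. x0 V E (\<lambda>v. if v \<in> corona_V V then 1 else 0) p)
     = 2 * (int (card (edges (corona_V V) (corona_E V E))) - int (card (corona_V V)))"
proof -
  let ?f = "\<lambda>v. if v \<in> corona_V V then 1 else 0 :: int"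
  have fV: "finite V" using sg simple_graph_def by blast
  have fn: "\<And>u. finite (nbhd V E u)" using fV unfolding nbhd_def by simp
  have nV: "\<And>u w. w \<in> nbhd V E u \<Longrightarrow> w \<in> V" unfolding nbhd_def by simp
  have xs: "x0 V E ?f (u,False) + x0 V E ?f (u,True) = int (card (nbhd V E u)) - 2" if "u \<in> V" for u
  proof -
    have "(\<Sum>w\<in>nbhd V E u. ?f (w, True)) = (\<Sum>w\<in>nbhd V E u. 1)"
      by (rule sum.cong) (auto simp: corona_V_def dest: nV)
    then show ?thesis using that by (simp add: x0_def corona_V_def)
  qed
  have S: "(\<Sum>p\<in>corona_V V. x0 V E ?f p) = (\<Sum>u\<in>V. int (card (nbhd V E u)) - 2)"
    unfolding sum_corona[OF fV] by (rule sum.cong) (simp_all add: xs)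
  have dF: "card (nbhd (corona_V V) (corona_E V E) (u,False)) = card (nbhd V E u) + 1" if "u \<in> V" for u
  proof -
    have "inj_on (\<lambda>w. (w,False)) (nbhd V E u)" by (auto simp: inj_on_def)
    then show ?thesis unfolding corona_nbF[OF sg that] using fn by (simp add: card_image card_insert_if image_iff)
  qed
  have dT: "card (nbhd (corona_V V) (corona_E V E) (u,True)) = 1" if "u \<in> V" for u
    unfolding corona_nbT[OF sg that] by simp
  have "2 * card (edges (corona_V V) (corona_E V E)) = (\<Sum>p\<in>corona_V V. card (nbhd (corona_V V) (corona_E V E) p))"
    using handshake[OF corona_sg[OF sg]] by simp
  also have "\<dots> = (\<Sum>u\<in>V. card (nbhd V E u) + 2)"
    unfolding sum_corona[OF fV] by (rule sum.cong) (simp_all add: dF dT)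
  finally have "int (2 * card (edges (corona_V V) (corona_E V E))) = int (\<Sum>u\<in>V. card (nbhd V E u) + 2)"
    by simp
  then have m: "2 * int (card (edges (corona_V V) (corona_E V E))) = (\<Sum>u\<in>V. int (card (nbhd V E u)) + 2)"
    by (simp add: of_nat_sum add.commute)
  have n: "int (card (corona_V V)) = 2 * int (card V)"
    unfolding corona_V_def using fV by (simp add: card_cartesian_product)
  show ?thesis unfolding S using m n by (simp add: sum.distrib sum_subtractf right_diff_distrib)
qed


theorem lemma3p9:
  fixes V :: "'a set" and E :: "'a \<Rightarrow> 'a \<Rightarrow> bool"
  assumes "simple_graph V E"
  defines "GV \<equiv> corona_V V" and "GE \<equiv> corona_E V E"
  shows "(\<forall>l::int. l \<ge> 2 \<longrightarrow> A_AW l GV GE)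
    \<and> (\<forall>l::int. l \<ge> 2 \<longrightarrow>
         T_set l GV GE GV 1 = {(2 * (int (card (edges GV GE)) - int (card GV))) mod l})
    \<and> (forest GV GE \<longrightarrow> (\<forall>l::int. l \<ge> 2 \<longrightarrow>
         T_set l GV GE GV 1 = {(- 2 * int (card (components GV GE))) mod l}))"
proof -
  have sg: "simple_graph V E" by (rule assms(1))
  have P1: "\<forall>l::int. l \<ge> 2 \<longrightarrow> A_AW l GV GE"
    unfolding A_AW_def winnable_def GV_def GE_def using x0_wins[OF sg] by blast
  have T: "T_set l GV GE GV 1 = {(2 * (int (card (edges GV GE)) - int (card GV))) mod l}" for l
    unfolding GV_def GE_def using T_main[OF sg, of l] S_val[OF sg] by simp
  have P3: "forest GV GE \<Longrightarrow> 2 * (int (card (edges GV GE)) - int (card GV)) = - 2 * int (card (components GV GE))"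
  proof -
    assume "forest GV GE"
    then have "card (edges GV GE) + card (components GV GE) = card GV"
      using forest_count[OF corona_sg[OF sg]] unfolding GV_def GE_def by blast
    then have "int (card (edges GV GE)) + int (card (components GV GE)) = int (card GV)"
      by (metis of_nat_add)
    then show ?thesis by (simp add: algebra_simps)
  qed
  show ?thesis using P1 T P3 by simp
qed

end
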